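(* Let $\alpha>0$ and for $w\in\mathbb{D}$ and $i\in\mathbb{N}$ set $f_w^{[i]}(z)=\frac{z^i}{(1-\overline{w}z)^{\alpha+i}}$, $z\in\mathbb{D}$. Then for each $i\ge1$, $\|f_w^{[i]}\|_{\mathcal{B}^{\alpha}}\simeq\frac{1}{(1-|w|^2)^{i+1}}$ for all $w\in\mathbb{D}$, and $\|f_w^{[0]}\|_{\mathcal{B}^{\alpha}}\simeq\frac{1}{1-|w|^2}$ for all $w\in\mathbb{D}$ with $|w|>\frac12$.
   Context: $\mathbb{D}$ is the open unit disc in $\mathbb{C}$. For $\alpha>0$, $\mathcal{B}^{\alpha}$ is the space of analytic $f$ on $\mathbb{D}$ with $\|f\|_{\mathcal{B}^{\alpha}}=|f(0)|+\sup_{z\in\mathbb{D}}(1-|z|^2)^{\alpha}|f'(z)|<\infty$. $A\simeq B$ means there are constants $C_1,C_2>0$ independent of $w$ (possibly depending on $\alpha$ and $i$) with $C_1B\le A\le C_2B$. *)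

theory Defs
  imports "HOL-Complex_Analysis.Complex_Analysis"
begin

text \<open>Bloch-type norm on the unit disc, valued in ereal so that an infinite
  supremum is represented faithfully (the norm is \<infinity> when f is not in B^alpha).\<close>
definition bloch_norm :: "real \<Rightarrow> (complex \<Rightarrow> complex) \<Rightarrow> ereal" where
  "bloch_norm \<alpha> f = ereal (cmod (f 0)) +
     (SUP z\<in>ball 0 1. ereal ((1 - (cmod z)\<^sup>2) powr \<alpha> * cmod (deriv f z)))"

text \<open>Test functions f_w^[i](z) = z^i / (1 - conj(w) z)^(alpha+i), with the
  principal branch of the power (1 - conj(w) z has positive real part on the disc).\<close>
definition test_fun :: "real \<Rightarrow> complex \<Rightarrow> nat \<Rightarrow> complex \<Rightarrow> complex" where
  "test_fun \<alpha> w i z = z ^ i / (1 - cnj w * z) powr (complex_of_real (\<alpha> + real i))"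

end

theory Submission
  imports Defs
begin

lemma re_pos:
  assumes "cmod w < 1" "cmod z < 1"
  shows "Re (1 - cnj w * z) > 0"
proof -
  have "cmod w * cmod z \<le> cmod w * 1" using assms by (intro mult_left_mono) auto
  then have "cmod (cnj w * z) < 1" using assms by (simp add: norm_mult)
  then have "Re (cnj w * z) < 1" using complex_Re_le_cmod le_less_trans by blast
  then show ?thesis by simp
qed

lemma not_nonpos:
  assumes "cmod w < 1" "cmod z < 1"
  shows "1 - cnj w * z \<notin> \<real>\<^sub>\<le>\<^sub>0"
  using re_pos[OF assms] by (auto simp: complex_nonpos_Reals_iff)

lemma deriv_tf:
  assumes "cmod w < 1" "cmod z < 1"
  shows "deriv (test_fun \<alpha> w i) z = of_nat i * z^(i-1) * (1 - cnj w * z) powr (- of_real (\<alpha> + i))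
     + z^i * (of_real (\<alpha>+i) * cnj w * (1 - cnj w*z) powr (- of_real(\<alpha>+i) - 1))"
proof -
  have eq: "test_fun \<alpha> w i = (\<lambda>z. z^i * (1 - cnj w * z) powr (- of_real(\<alpha>+i)))"
    unfolding test_fun_def powr_minus divide_inverse ..
  define s where "s = - complex_of_real(\<alpha>+i)"
  have d1: "((\<lambda>z. 1 - cnj w * z) has_field_derivative -cnj w) (at z)"
    by (auto intro!: derivative_eq_intros)
  have d2: "((\<lambda>z. (1 - cnj w * z) powr s) has_field_derivative (s * (1 - cnj w * z) powr (s - 1)) * (-cnj w)) (at z)"
    by (rule DERIV_chain2[OF has_field_derivative_powr[OF not_nonpos[OF assms]] d1])
  have "((\<lambda>z. z^i * (1 - cnj w * z) powr (- of_real(\<alpha>+i))) has_field_derivative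
     (of_nat i * z^(i-1) * (1 - cnj w * z) powr (- of_real (\<alpha> + i))
     + z^i * (of_real (\<alpha>+i) * cnj w * (1 - cnj w*z) powr (- of_real(\<alpha>+i) - 1)))) (at z)"
    using DERIV_mult[OF DERIV_power[OF DERIV_ident] d2] unfolding s_def by (simp add: algebra_simps)
  then show ?thesis unfolding eq by (rule DERIV_imp_deriv)
qed

lemma norm_X:
  assumes "cmod w < 1" "cmod z < 1"
  shows "cmod (1 - cnj w * z) > 0" "cmod (1 - cnj w * z) \<ge> 1 - cmod w * cmod z"
    "cmod (1 - cnj w * z) \<le> 2"
proof -
  have "1 - cnj w * z \<noteq> 0"
  proof
    assume "1 - cnj w * z = 0"
    then have "Re (1 - cnj w * z) = 0" by simp
    with re_pos[OF assms] show False by simp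
  qed
  then show "cmod (1 - cnj w * z) > 0" by simp
  have "norm (1::complex) - norm (cnj w * z) \<le> norm (1 - cnj w * z)" by (rule norm_triangle_ineq2)
  then show "cmod (1 - cnj w * z) \<ge> 1 - cmod w * cmod z" by (simp add: norm_mult)
  have "norm (1 - cnj w * z) \<le> norm (1::complex) + norm (cnj w * z)" by (rule norm_triangle_ineq4)
  moreover have "cmod w * cmod z \<le> 1" using assms
    by (metis less_eq_real_def mult_le_one norm_ge_zero)
  ultimately show "cmod (1 - cnj w * z) \<le> 2" by (simp add: norm_mult)
qed

lemma norm_powr_X:
  assumes "cmod w < 1" "cmod z < 1"
  shows "cmod ((1 - cnj w * z) powr (- complex_of_real b)) = cmod (1 - cnj w * z) powr (- b)"
    "cmod ((1 - cnj w * z) powr (- complex_of_real b - 1)) = cmod (1 - cnj w * z) powr (- b - 1)"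
proof -
  show "cmod ((1 - cnj w * z) powr (- complex_of_real b)) = cmod (1 - cnj w * z) powr (- b)"
    by (subst norm_powr_real_powr') auto
  have "- complex_of_real b - 1 = complex_of_real (- b - 1)" by simp
  then show "cmod ((1 - cnj w * z) powr (- complex_of_real b - 1)) = cmod (1 - cnj w * z) powr (- b - 1)"
    by (metis Re_complex_of_real Reals_of_real norm_powr_real_powr')
qed

lemma upper_pt:
  assumes a0: "\<alpha> > 0" and w: "cmod w < 1" and z: "cmod z < 1"
  shows "(1 - (cmod z)\<^sup>2) powr \<alpha> * cmod (deriv (test_fun \<alpha> w i) z)
     \<le> (2 * real i + \<alpha> + real i) * 2 powr \<alpha> * 2 ^ (i+1) / (1 - (cmod w)\<^sup>2) ^ (i+1)"
proof -
  define X where "X = 1 - cnj w * z"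
  define N where "N = cmod X"
  define a where "a = \<alpha> + real i"
  define P where "P = N powr (- a - 1)"
  define r where "r = cmod z"
  define s where "s = cmod w"
  have r0: "0 \<le> r" "r < 1" using z r_def by auto
  have s0: "0 \<le> s" "s < 1" using w s_def by auto
  have N0: "N > 0" and N1: "N \<ge> 1 - s * r" and N2: "N \<le> 2"
    using norm_X[OF w z] unfolding N_def X_def s_def r_def by auto
  have P0: "P \<ge> 0" unfolding P_def by simp
  have nX1: "cmod (X powr (- complex_of_real a)) = N * P"
  proof -
    have "cmod (X powr (- complex_of_real a)) = N powr (-a)"
      unfolding X_def N_def by (rule norm_powr_X[OF w z])
    also have "\<dots> = N powr (1 + (-a - 1))" by simp
    also have "\<dots> = N * P" unfolding P_def powr_add using N0 by simp
    finally show ?thesis .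
  qed
  have nX2: "cmod (X powr (- complex_of_real a - 1)) = P"
    unfolding X_def N_def P_def by (rule norm_powr_X[OF w z])
  have der: "deriv (test_fun \<alpha> w i) z = of_nat i * z^(i-1) * X powr (- of_real a)
     + z^i * (of_real a * cnj w * X powr (- of_real a - 1))"
    unfolding X_def a_def by (rule deriv_tf[OF w z])
  have "cmod (deriv (test_fun \<alpha> w i) z) \<le> cmod (of_nat i * z^(i-1) * X powr (- of_real a))
     + cmod (z^i * (of_real a * cnj w * X powr (- of_real a - 1)))"
    unfolding der by (rule norm_triangle_ineq)
  also have "\<dots> = real i * r^(i-1) * (N * P) + r^i * (a * s * P)"
    using a0 by (simp add: norm_mult norm_power nX1 nX2 r_def s_def a_def[symmetric]) (simp add: a_def)
  also have "\<dots> \<le> real i * 1 * (2 * P) + 1 * (a * 1 * P)"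
  proof -
    have a00: "a \<ge> 0" using a0 by (simp add: a_def)
    have ri1: "r ^ (i - 1) \<le> 1" "r ^ i \<le> 1" using r0 by (auto intro: power_le_one)
    have "N * P \<le> 2 * P" using N2 P0 by (intro mult_right_mono) auto
    then have "r^(i-1) * (N * P) \<le> 1 * (2 * P)" using ri1 r0 P0 N0 N2
      by (intro mult_mono) auto
    then have t1: "real i * r^(i-1) * (N * P) \<le> real i * 1 * (2 * P)"
      by (simp add: mult.assoc mult_left_mono)
    have "a * s * P \<le> a * 1 * P" using s0 P0 a00 by (intro mult_right_mono mult_left_mono) auto
    then have t2: "r^i * (a * s * P) \<le> 1 * (a * 1 * P)" using ri1 r0 P0 a00 s0
      by (intro mult_mono) auto
    show ?thesis using t1 t2 by linarith
  qed
  finally have dbound: "cmod (deriv (test_fun \<alpha> w i) z) \<le> (2 * real i + a) * P"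
    by (simp add: algebra_simps)
  have "1 - r\<^sup>2 \<le> 2 * N"
  proof -
    have "1 - r\<^sup>2 = (1 - r) * (1 + r)" by (simp add: power2_eq_square algebra_simps)
    also have "\<dots> \<le> (1 - r) * 2" using r0 by (intro mult_left_mono) auto
    also have "\<dots> \<le> 2 * N"
    proof -
      have "s * r \<le> r" using s0 r0 by (intro mult_left_le_one_le) auto
      moreover have "(1 - r) * 2 = 2 - 2 * r" by simp
      ultimately show ?thesis using N1 by linarith
    qed
    finally show ?thesis .
  qed
  then have pa: "(1 - r\<^sup>2) powr \<alpha> \<le> 2 powr \<alpha> * N powr \<alpha>"
  proof -
    assume h: "1 - r\<^sup>2 \<le> 2 * N"
    have "0 \<le> 1 - r\<^sup>2" using r0 by (simp add: abs_square_le_1)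
    then have "(1 - r\<^sup>2) powr \<alpha> \<le> (2 * N) powr \<alpha>" using h a0 by (intro powr_mono2) auto
    also have "\<dots> = 2 powr \<alpha> * N powr \<alpha>" using N0 by (simp add: powr_mult)
    finally show ?thesis .
  qed
  have NP: "N powr \<alpha> * P = 1 / N ^ (i+1)"
  proof -
    have "N powr \<alpha> * P = N powr (\<alpha> + (-a - 1))" unfolding P_def powr_add ..
    also have "\<alpha> + (-a - 1) = - real (i+1)" unfolding a_def by simp
    also have "N powr (- real (i+1)) = 1 / N powr real (i+1)" by (rule powr_minus_divide)
    also have "N powr real (i+1) = N ^ (i+1)" by (rule powr_realpow[OF N0])
    finally show ?thesis .
  qed
  have "(1 - s\<^sup>2) / 2 \<le> N"
  proof -
    have "(1 - s\<^sup>2) / 2 = (1 - s) * ((1 + s) / 2)" by (simp add: power2_eq_square algebra_simps)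
    also have "\<dots> \<le> (1 - s) * 1" using s0 by (intro mult_left_mono) auto
    also have "\<dots> \<le> N"
    proof -
      have "s * r \<le> s" using s0 r0 by (intro mult_right_le_one_le) auto
      then show ?thesis using N1 by simp
    qed
    finally show ?thesis .
  qed
  then have "((1 - s\<^sup>2) / 2) ^ (i+1) \<le> N ^ (i+1)"
    using s0 by (intro power_mono) (auto simp: power_le_one abs_square_less_1)
  then have invN: "1 / N ^ (i+1) \<le> 2 ^ (i+1) / (1 - s\<^sup>2) ^ (i+1)"
  proof -
    assume h: "((1 - s\<^sup>2) / 2) ^ (i+1) \<le> N ^ (i+1)"
    have pos: "0 < ((1 - s\<^sup>2) / 2) ^ (i+1)" using s0 by (simp add: abs_square_less_1)
    have "1 / N ^ (i+1) \<le> 1 / ((1 - s\<^sup>2) / 2) ^ (i+1)"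
      using h pos by (intro divide_left_mono) auto
    also have "\<dots> = 2 ^ (i+1) / (1 - s\<^sup>2) ^ (i+1)" by (simp add: power_divide)
    finally show ?thesis .
  qed
  have "(1 - r\<^sup>2) powr \<alpha> * cmod (deriv (test_fun \<alpha> w i) z)
      \<le> (2 powr \<alpha> * N powr \<alpha>) * ((2 * real i + a) * P)"
    using pa dbound by (intro mult_mono) (auto simp: a_def)
  also have "\<dots> = 2 powr \<alpha> * (2 * real i + a) * (N powr \<alpha> * P)" by (simp add: algebra_simps)
  also have "\<dots> \<le> 2 powr \<alpha> * (2 * real i + a) * (2 ^ (i+1) / (1 - s\<^sup>2) ^ (i+1))"
    unfolding NP using invN a0 by (intro mult_left_mono) (auto simp: a_def)
  finally show ?thesis unfolding r_def s_def a_def by (simp add: algebra_simps)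
qed

lemma deriv_fact:
  assumes a0: "\<alpha> > 0" and w: "cmod w < 1" and z: "cmod z < 1" and i: "i \<ge> 1"
    and t: "cnj w * z = complex_of_real t" and t0: "t \<ge> 0"
  shows "cmod (deriv (test_fun \<alpha> w i) z) = cmod z ^ (i-1) * (1 - t) powr (- (\<alpha> + real i) - 1) * (real i + \<alpha> * t)"
proof -
  define X where "X = 1 - cnj w * z"
  define a where "a = \<alpha> + real i"
  have Xt: "X = complex_of_real (1 - t)" unfolding X_def t by simp
  have t1: "t < 1" using re_pos[OF w z] unfolding t by simp
  have der: "deriv (test_fun \<alpha> w i) z = of_nat i * z^(i-1) * X powr (- of_real a)
     + z^i * (of_real a * cnj w * X powr (- of_real a - 1))"
    unfolding X_def a_def by (rule deriv_tf[OF w z])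
  have "X powr (- of_real a) = X powr ((- of_real a - 1) + 1)" by simp
  also have "\<dots> = X powr (- of_real a - 1) * X" unfolding powr_add by simp
  finally have e1: "X powr (- of_real a) = X powr (- of_real a - 1) * X" .
  have e2: "z ^ i = z ^ (i-1) * z" using i by (metis Suc_diff_le diff_Suc_1 power_Suc2)
  have "deriv (test_fun \<alpha> w i) z = z^(i-1) * X powr (- of_real a - 1) * (of_nat i * X + of_real a * (cnj w * z))"
    unfolding der e1 e2 by (simp add: algebra_simps)
  also have "of_nat i * X + of_real a * (cnj w * z) = complex_of_real (real i + \<alpha> * t)"
    unfolding Xt t a_def by (simp add: algebra_simps)
  finally have D: "deriv (test_fun \<alpha> w i) z = z^(i-1) * X powr (- of_real a - 1) * complex_of_real (real i + \<alpha> * t)" .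
  have "cmod (deriv (test_fun \<alpha> w i) z) = cmod z ^ (i-1) * cmod (X powr (- of_real a - 1)) * \<bar>real i + \<alpha> * t\<bar>"
    unfolding D by (simp only: norm_mult norm_power norm_of_real)
  also have "cmod (X powr (- of_real a - 1)) = cmod X powr (- a - 1)"
    unfolding X_def by (rule norm_powr_X[OF w z])
  also have "cmod X = 1 - t" unfolding Xt norm_of_real using t1 by simp
  also have "\<bar>real i + \<alpha> * t\<bar> = real i + \<alpha> * t" using a0 t0 by simp
  finally show ?thesis unfolding a_def .
qed

lemma powr_neg_ge1:
  fixes x b :: real
  assumes "0 < x" "x \<le> 1" "b \<ge> 0"
  shows "x powr (- b) \<ge> 1"
proof -
  have "x powr b \<le> 1 powr b" using assms by (intro powr_mono2) auto
  then have "x powr b \<le> 1" by simp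
  moreover have "x powr b > 0" using assms by simp
  ultimately show ?thesis by (simp add: powr_minus_divide)
qed

lemma powr_combine:
  fixes x :: real
  assumes "0 < x"
  shows "x powr \<alpha> * x powr (- (\<alpha> + real i) - 1) = 1 / x ^ (i+1)"
proof -
  have "x powr \<alpha> * x powr (- (\<alpha> + real i) - 1) = x powr (\<alpha> + (- (\<alpha> + real i) - 1))"
    unfolding powr_add ..
  also have "\<alpha> + (- (\<alpha> + real i) - 1) = - real (i+1)" by simp
  also have "x powr (- real (i+1)) = 1 / x powr real (i+1)" by (rule powr_minus_divide)
  also have "x powr real (i+1) = x ^ (i+1)" by (rule powr_realpow[OF assms])
  finally show ?thesis .
qed

lemma lower_i:
  assumes a0: "\<alpha> > 0" and w: "cmod w < 1" and i: "i \<ge> 1"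
  shows "\<exists>z. cmod z < 1 \<and> real i * (1/2)^(i-1) * (3/4) powr \<alpha> * (3/4)^(i+1) * (1 / (1 - (cmod w)\<^sup>2) ^ (i+1))
     \<le> (1 - (cmod z)\<^sup>2) powr \<alpha> * cmod (deriv (test_fun \<alpha> w i) z)"
proof -
  define s where "s = cmod w"
  define Q where "Q = 1 / (1 - s\<^sup>2) ^ (i+1)"
  define B where "B = real i * (1/2::real)^(i-1)"
  have s0: "0 \<le> s" "s < 1" using w s_def by auto
  have ss: "0 < 1 - s\<^sup>2" using s0 by (simp add: abs_square_less_1)
  have Q0: "Q > 0" unfolding Q_def using ss by simp
  have B0: "B \<ge> 0" unfolding B_def by simp
  have c1: "(3/4::real) powr \<alpha> \<le> 1" using a0 by (simp add: powr_le1)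
  have c2: "(3/4::real)^(i+1) \<le> 1" by (rule power_le_one) auto
  show ?thesis
  proof (cases "s \<ge> 1/2")
    case True
    have t: "cnj w * w = complex_of_real (s\<^sup>2)"
      unfolding s_def by (metis complex_norm_square mult.commute)
    have "(1 - (cmod w)\<^sup>2) powr \<alpha> * cmod (deriv (test_fun \<alpha> w i) w)
       = (1 - s\<^sup>2) powr \<alpha> * (s ^ (i-1) * (1 - s\<^sup>2) powr (- (\<alpha> + real i) - 1) * (real i + \<alpha> * s\<^sup>2))"
      using deriv_fact[OF a0 w w i t] s_def by simp
    also have "\<dots> = s ^ (i-1) * (real i + \<alpha> * s\<^sup>2) * ((1 - s\<^sup>2) powr \<alpha> * (1 - s\<^sup>2) powr (- (\<alpha> + real i) - 1))"
      by (simp add: algebra_simps)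
    also have "\<dots> = s ^ (i-1) * (real i + \<alpha> * s\<^sup>2) * Q"
      unfolding powr_combine[OF ss] Q_def ..
    finally have V: "(1 - (cmod w)\<^sup>2) powr \<alpha> * cmod (deriv (test_fun \<alpha> w i) w) = s ^ (i-1) * (real i + \<alpha> * s\<^sup>2) * Q" .
    have "(1/2::real)^(i-1) \<le> s^(i-1)" using True by (intro power_mono) auto
    moreover have "real i \<le> real i + \<alpha> * s\<^sup>2" using a0 by simp
    ultimately have "(1/2::real)^(i-1) * real i \<le> s ^ (i-1) * (real i + \<alpha> * s\<^sup>2)"
      using s0 by (intro mult_mono) auto
    then have "B \<le> s ^ (i-1) * (real i + \<alpha> * s\<^sup>2)" unfolding B_def by (simp add: mult.commute)
    moreover have "B * (3/4) powr \<alpha> * (3/4)^(i+1) \<le> B"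
    proof -
      have "(3/4::real) powr \<alpha> * (3/4)^(i+1) \<le> 1 * 1" using c1 c2 by (intro mult_mono) auto
      then have "B * ((3/4::real) powr \<alpha> * (3/4)^(i+1)) \<le> B * 1" using B0 by (intro mult_left_mono) auto
      then show ?thesis by (simp add: mult.assoc)
    qed
    ultimately have "B * (3/4) powr \<alpha> * (3/4)^(i+1) * Q \<le> s ^ (i-1) * (real i + \<alpha> * s\<^sup>2) * Q"
      using Q0 by (intro mult_right_mono) auto
    then have "B * (3/4) powr \<alpha> * (3/4)^(i+1) * Q \<le> (1 - (cmod w)\<^sup>2) powr \<alpha> * cmod (deriv (test_fun \<alpha> w i) w)"
      unfolding V .
    then have fin: "real i * (1/2)^(i-1) * (3/4) powr \<alpha> * (3/4)^(i+1) * (1 / (1 - (cmod w)\<^sup>2) ^ (i+1))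
       \<le> (1 - (cmod w)\<^sup>2) powr \<alpha> * cmod (deriv (test_fun \<alpha> w i) w)" unfolding B_def Q_def s_def .
    show ?thesis by (rule exI[of _ w], intro conjI w fin)
  next
    case False
    define u where "u = (if w = 0 then 1 else complex_of_real (1/s) * w)"
    define z where "z = complex_of_real (1/2) * u"
    have nu: "cmod u = 1" unfolding u_def s_def by (simp add: norm_mult norm_divide)
    have nz: "cmod z = 1/2" unfolding z_def by (simp add: norm_mult nu)
    have t: "cnj w * z = complex_of_real (s / 2)"
    proof (cases "w = 0")
      case True then show ?thesis unfolding z_def u_def s_def by simp
    next
      case False
      then have sp: "s > 0" unfolding s_def by simp
      have "cnj w * z = complex_of_real (1/2) * complex_of_real (1/s) * (cnj w * w)"
        unfolding z_def u_def using False by (simp add: algebra_simps)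
      also have "cnj w * w = complex_of_real (s\<^sup>2)"
        unfolding s_def by (metis complex_norm_square mult.commute)
      finally show ?thesis using sp by (simp add: power2_eq_square)
    qed
    have z1: "cmod z < 1" using nz by simp
    have ts: "0 < 1 - s/2" "1 - s/2 \<le> 1" using s0 by auto
    have "(1 - (cmod z)\<^sup>2) powr \<alpha> * cmod (deriv (test_fun \<alpha> w i) z)
       = (3/4) powr \<alpha> * ((1/2) ^ (i-1) * (1 - s/2) powr (- (\<alpha> + real i) - 1) * (real i + \<alpha> * (s/2)))"
      using deriv_fact[OF a0 w z1 i t] s0 unfolding nz by (simp add: power2_eq_square)
    also have "\<dots> \<ge> (3/4) powr \<alpha> * ((1/2) ^ (i-1) * 1 * real i)"
    proof -
      have h: "1 \<le> (1 - s/2) powr (- (\<alpha> + real i + 1))" using ts a0 by (intro powr_neg_ge1) auto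
      have eqn: "- (\<alpha> + real i) - 1 = - (\<alpha> + real i + 1)" by simp
      have p1: "1 \<le> (1 - s/2) powr (- (\<alpha> + real i) - 1)" unfolding eqn by (rule h)
      have "real i \<le> real i + \<alpha> * (s/2)" using a0 s0 by simp
      then have "(1/2::real) ^ (i-1) * 1 * real i \<le> (1/2) ^ (i-1) * (1 - s/2) powr (- (\<alpha> + real i) - 1) * (real i + \<alpha> * (s/2))"
        using p1 by (intro mult_mono) auto
      then show ?thesis by (intro mult_left_mono) auto
    qed
    finally have V: "(3/4) powr \<alpha> * B \<le> (1 - (cmod z)\<^sup>2) powr \<alpha> * cmod (deriv (test_fun \<alpha> w i) z)"
      unfolding B_def by (simp add: mult.commute)
    have "(3/4::real)^(i+1) * Q \<le> 1"
    proof -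
      have "s * s \<le> (1/2) * (1/2)" using False s0 by (intro mult_mono) auto
      then have "3/4 \<le> 1 - s\<^sup>2" by (simp add: power2_eq_square)
      then have "(3/4::real)^(i+1) \<le> (1 - s\<^sup>2)^(i+1)" by (intro power_mono) auto
      then show ?thesis unfolding Q_def using ss by simp
    qed
    then have "(3/4) powr \<alpha> * B * ((3/4::real)^(i+1) * Q) \<le> (3/4) powr \<alpha> * B * 1"
      using B0 by (intro mult_left_mono) auto
    then have "B * (3/4) powr \<alpha> * (3/4)^(i+1) * Q \<le> (3/4) powr \<alpha> * B" by (simp add: algebra_simps)
    then have "B * (3/4) powr \<alpha> * (3/4)^(i+1) * Q \<le> (1 - (cmod z)\<^sup>2) powr \<alpha> * cmod (deriv (test_fun \<alpha> w i) z)"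
      using V by linarith
    then have fin: "real i * (1/2)^(i-1) * (3/4) powr \<alpha> * (3/4)^(i+1) * (1 / (1 - (cmod w)\<^sup>2) ^ (i+1))
       \<le> (1 - (cmod z)\<^sup>2) powr \<alpha> * cmod (deriv (test_fun \<alpha> w i) z)" unfolding B_def Q_def s_def .
    show ?thesis by (rule exI[of _ z], intro conjI z1 fin)
  qed
qed

lemma lower_0:
  assumes a0: "\<alpha> > 0" and w: "cmod w < 1" and wh: "cmod w > 1/2"
  shows "\<alpha> / 2 * (1 / (1 - (cmod w)\<^sup>2)) \<le> (1 - (cmod w)\<^sup>2) powr \<alpha> * cmod (deriv (test_fun \<alpha> w 0) w)"
proof -
  define s where "s = cmod w"
  define X where "X = 1 - cnj w * w"
  define a where "a = \<alpha> + real 0"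
  have s0: "1/2 < s" "s < 1" using w wh s_def by auto
  have ss: "0 < 1 - s\<^sup>2" using s0 by (simp add: abs_square_less_1)
  have t: "cnj w * w = complex_of_real (s\<^sup>2)"
    unfolding s_def by (metis complex_norm_square mult.commute)
  have Xt: "X = complex_of_real (1 - s\<^sup>2)" unfolding X_def t by simp
  have der: "deriv (test_fun \<alpha> w 0) w = of_nat 0 * w^(0-1) * X powr (- of_real a)
     + w^0 * (of_real a * cnj w * X powr (- of_real a - 1))"
    unfolding X_def a_def by (rule deriv_tf[OF w w])
  have D: "deriv (test_fun \<alpha> w 0) w = of_real a * cnj w * X powr (- of_real a - 1)"
    unfolding der by simp
  have "cmod (deriv (test_fun \<alpha> w 0) w) = \<bar>a\<bar> * cmod w * cmod (X powr (- of_real a - 1))"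
    unfolding D by (simp only: norm_mult norm_of_real complex_mod_cnj)
  also have "cmod (X powr (- of_real a - 1)) = cmod X powr (- a - 1)"
    unfolding X_def by (rule norm_powr_X[OF w w])
  also have "cmod X = 1 - s\<^sup>2" unfolding Xt norm_of_real using ss by simp
  also have "\<bar>a\<bar> = \<alpha>" unfolding a_def using a0 by simp
  finally have N: "cmod (deriv (test_fun \<alpha> w 0) w) = \<alpha> * s * (1 - s\<^sup>2) powr (- (\<alpha> + real 0) - 1)"
    unfolding a_def s_def by simp
  have "(1 - s\<^sup>2) powr \<alpha> * cmod (deriv (test_fun \<alpha> w 0) w)
      = \<alpha> * s * ((1 - s\<^sup>2) powr \<alpha> * (1 - s\<^sup>2) powr (- (\<alpha> + real 0) - 1))"
    unfolding N by (simp add: algebra_simps)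
  also have "\<dots> = \<alpha> * s * (1 / (1 - s\<^sup>2) ^ (0+1))" unfolding powr_combine[OF ss] ..
  finally have V: "(1 - s\<^sup>2) powr \<alpha> * cmod (deriv (test_fun \<alpha> w 0) w) = \<alpha> * s * (1 / (1 - s\<^sup>2))" by simp
  have "\<alpha> / 2 * (1 / (1 - s\<^sup>2)) \<le> \<alpha> * s * (1 / (1 - s\<^sup>2))"
    using a0 s0 ss by (intro mult_right_mono) auto
  then show ?thesis using V unfolding s_def by simp
qed

lemma sup_le:
  assumes "\<And>z. cmod z < 1 \<Longrightarrow> (1 - (cmod z)\<^sup>2) powr \<alpha> * cmod (deriv f z) \<le> M"
  shows "bloch_norm \<alpha> f \<le> ereal (cmod (f 0) + M)"
proof -
  have "(SUP z\<in>ball 0 1. ereal ((1 - (cmod z)\<^sup>2) powr \<alpha> * cmod (deriv f z))) \<le> ereal M"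
    by (rule SUP_least) (use assms in auto)
  then have "ereal (cmod (f 0)) + (SUP z\<in>ball 0 1. ereal ((1 - (cmod z)\<^sup>2) powr \<alpha> * cmod (deriv f z)))
      \<le> ereal (cmod (f 0)) + ereal M" by (rule add_left_mono)
  then show ?thesis unfolding bloch_norm_def by simp
qed

lemma sup_ge:
  assumes "cmod z < 1" "m \<le> (1 - (cmod z)\<^sup>2) powr \<alpha> * cmod (deriv f z)"
  shows "ereal m \<le> bloch_norm \<alpha> f"
proof -
  have "ereal m \<le> ereal ((1 - (cmod z)\<^sup>2) powr \<alpha> * cmod (deriv f z))" using assms by simp
  also have "\<dots> \<le> (SUP z\<in>ball 0 1. ereal ((1 - (cmod z)\<^sup>2) powr \<alpha> * cmod (deriv f z)))"
    by (rule SUP_upper) (use assms in auto)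
  also have "\<dots> \<le> ereal (cmod (f 0)) + (SUP z\<in>ball 0 1. ereal ((1 - (cmod z)\<^sup>2) powr \<alpha> * cmod (deriv f z)))"
    by (rule add_increasing) auto
  finally show ?thesis unfolding bloch_norm_def .
qed

theorem lemma2p4:
  fixes \<alpha> :: real
  assumes "\<alpha> > 0"
  shows "(\<forall>i::nat. i \<ge> 1 \<longrightarrow>
            (\<exists>C1>0. \<exists>C2>0. \<forall>w. cmod w < 1 \<longrightarrow>
               ereal (C1 * (1 / (1 - (cmod w)\<^sup>2) ^ (i + 1))) \<le> bloch_norm \<alpha> (test_fun \<alpha> w i) \<and>
               bloch_norm \<alpha> (test_fun \<alpha> w i) \<le> ereal (C2 * (1 / (1 - (cmod w)\<^sup>2) ^ (i + 1)))))
       \<and> (\<exists>C1>0. \<exists>C2>0. \<forall>w. cmod w < 1 \<and> cmod w > 1/2 \<longrightarrow>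
               ereal (C1 * (1 / (1 - (cmod w)\<^sup>2))) \<le> bloch_norm \<alpha> (test_fun \<alpha> w 0) \<and>
               bloch_norm \<alpha> (test_fun \<alpha> w 0) \<le> ereal (C2 * (1 / (1 - (cmod w)\<^sup>2))))"
proof (intro conjI allI impI)
  fix i :: nat
  assume i: "i \<ge> 1"
  define K where "K = (2 * real i + \<alpha> + real i) * 2 powr \<alpha> * 2 ^ (i+1)"
  define C where "C = real i * (1/2)^(i-1) * (3/4) powr \<alpha> * (3/4)^(i+1)"
  have K0: "K > 0" unfolding K_def using assms by simp
  have C0: "C > 0" unfolding C_def using i by simp
  have main: "ereal (C * (1 / (1 - (cmod w)\<^sup>2) ^ (i + 1))) \<le> bloch_norm \<alpha> (test_fun \<alpha> w i) \<and>
               bloch_norm \<alpha> (test_fun \<alpha> w i) \<le> ereal (K * (1 / (1 - (cmod w)\<^sup>2) ^ (i + 1)))"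
    if w: "cmod w < 1" for w
  proof
    obtain z where z: "cmod z < 1" and
      zl: "C * (1 / (1 - (cmod w)\<^sup>2) ^ (i+1)) \<le> (1 - (cmod z)\<^sup>2) powr \<alpha> * cmod (deriv (test_fun \<alpha> w i) z)"
      using lower_i[OF assms w i] unfolding C_def by blast
    show "ereal (C * (1 / (1 - (cmod w)\<^sup>2) ^ (i + 1))) \<le> bloch_norm \<alpha> (test_fun \<alpha> w i)"
      by (rule sup_ge[OF z zl])
    have f0: "test_fun \<alpha> w i 0 = 0" unfolding test_fun_def using i by simp
    have "bloch_norm \<alpha> (test_fun \<alpha> w i) \<le> ereal (cmod (test_fun \<alpha> w i 0) + K / (1 - (cmod w)\<^sup>2) ^ (i+1))"
      by (rule sup_le) (use upper_pt[OF assms w] in \<open>simp add: K_def\<close>)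
    then show "bloch_norm \<alpha> (test_fun \<alpha> w i) \<le> ereal (K * (1 / (1 - (cmod w)\<^sup>2) ^ (i + 1)))"
      unfolding f0 by simp
  qed
  show "\<exists>C1>0. \<exists>C2>0. \<forall>w. cmod w < 1 \<longrightarrow>
               ereal (C1 * (1 / (1 - (cmod w)\<^sup>2) ^ (i + 1))) \<le> bloch_norm \<alpha> (test_fun \<alpha> w i) \<and>
               bloch_norm \<alpha> (test_fun \<alpha> w i) \<le> ereal (C2 * (1 / (1 - (cmod w)\<^sup>2) ^ (i + 1)))"
    using C0 K0 main by blast
next
  define K where "K = \<alpha> * 2 powr \<alpha> * 2 + 1"
  define C where "C = \<alpha> / 2"
  have K0: "K > 0" unfolding K_def using assms by (simp add: add_pos_pos)
  have C0: "C > 0" unfolding C_def using assms by simp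
  have main: "ereal (C * (1 / (1 - (cmod w)\<^sup>2))) \<le> bloch_norm \<alpha> (test_fun \<alpha> w 0) \<and>
               bloch_norm \<alpha> (test_fun \<alpha> w 0) \<le> ereal (K * (1 / (1 - (cmod w)\<^sup>2)))"
    if w: "cmod w < 1" and wh: "cmod w > 1/2" for w
  proof
    show "ereal (C * (1 / (1 - (cmod w)\<^sup>2))) \<le> bloch_norm \<alpha> (test_fun \<alpha> w 0)"
      by (rule sup_ge[OF w]) (use lower_0[OF assms w wh] in \<open>simp add: C_def\<close>)
    have f0: "test_fun \<alpha> w 0 0 = 1" unfolding test_fun_def by simp
    have ss: "0 < 1 - (cmod w)\<^sup>2" using w by (simp add: abs_square_less_1)
    have "bloch_norm \<alpha> (test_fun \<alpha> w 0) \<le> ereal (cmod (test_fun \<alpha> w 0 0) + (\<alpha> * 2 powr \<alpha> * 2) / (1 - (cmod w)\<^sup>2) ^ (0+1))"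
      by (rule sup_le) (use upper_pt[OF assms w, of _ 0] in simp)
    also have "cmod (test_fun \<alpha> w 0 0) + (\<alpha> * 2 powr \<alpha> * 2) / (1 - (cmod w)\<^sup>2) ^ (0+1)
       \<le> K * (1 / (1 - (cmod w)\<^sup>2))"
    proof -
      have "1 \<le> 1 / (1 - (cmod w)\<^sup>2)" using ss by simp
      then show ?thesis unfolding f0 K_def by (simp add: algebra_simps)
    qed
    finally show "bloch_norm \<alpha> (test_fun \<alpha> w 0) \<le> ereal (K * (1 / (1 - (cmod w)\<^sup>2)))" by simp
  qed
  show "\<exists>C1>0. \<exists>C2>0. \<forall>w. cmod w < 1 \<and> cmod w > 1/2 \<longrightarrow>
               ereal (C1 * (1 / (1 - (cmod w)\<^sup>2))) \<le> bloch_norm \<alpha> (test_fun \<alpha> w 0) \<and>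
               bloch_norm \<alpha> (test_fun \<alpha> w 0) \<le> ereal (C2 * (1 / (1 - (cmod w)\<^sup>2)))"
    using C0 K0 main by blast
qed

end
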